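(* Let $k>0$ and fix $\Delta\in\mathbb{N}$. For every integer $n$ with $-\Delta\le n\le -1$, except when $\{n,n+\Delta\}=\{-1,0\}$, there is a curve $\tau\mapsto\gamma_c(\tau)$, $\tau\in(0,1/2]$, of real numbers such that $\Omega_{n,\gamma_c(\tau),\tau}=\Omega_{n+\Delta,\gamma_c(\tau),\tau}$ (the eigenvalues $i\Omega_{n,\gamma,\tau}$ and $i\Omega_{n+\Delta,\gamma,\tau}$ of $\mathcal H_0(\gamma,\tau)$ collide). All such collisions take place away from the origin, except when $\Delta$ is odd and $n=-(\Delta+1)/2$, in which case $n+\Delta=-n-1$ and the eigenvalues $i\Omega_{n,\gamma,\tau}$ and $i\Omega_{-n-1,\gamma,\tau}$ collide at the origin for $\tau=1/2$, $\gamma=\gamma_c(1/2)$.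
   Context: For $k>0$, $\gamma\in\mathbb{R}$, $\tau\in(-1/2,1/2]\setminus\{0\}$ and $n\in\mathbb{Z}$, set $\Omega_{n,\gamma,\tau}=k^3(n+\tau)\big(1-(n+\tau)^2\big)+\frac{3\gamma^2}{k(n+\tau)}$. These satisfy $\mathcal H_0(\gamma,\tau)e^{inz}=i\Omega_{n,\gamma,\tau}e^{inz}$, where $\mathcal H_0(\gamma,\tau)=k^3(\partial_z+i\tau)+k^3(\partial_z+i\tau)^3-\frac{3\gamma^2}{k}(\partial_z+i\tau)^{-1}$ on $2\pi$-periodic square-integrable functions (the zero-amplitude Floquet-Bloch linearized Konopelchenko–Dubrovsky operator), whose spectrum is $\{i\Omega_{n,\gamma,\tau}:n\in\mathbb{Z}\}$. Two eigenvalues "collide" at $\gamma_c$ if $\Omega_{n,\gamma_c,\tau}=\Omega_{m,\gamma_c,\tau}$ for $n\ne m$. *)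

theory Defs
  imports "HOL-Analysis.Analysis"
begin

definition Omega :: "real \<Rightarrow> int \<Rightarrow> real \<Rightarrow> real \<Rightarrow> real" where
  "Omega k n \<gamma> \<tau> = k ^ 3 * (real_of_int n + \<tau>) * (1 - (real_of_int n + \<tau>) ^ 2)
      + 3 * \<gamma> ^ 2 / (k * (real_of_int n + \<tau>))"

end

theory Submission
  imports Defs
begin

lemma key:
  fixes a b k g :: real
  assumes "a \<noteq> 0" "b \<noteq> 0" "a \<noteq> b" "k > 0"
  shows "(k^3*a*(1-a^2) + 3*g^2/(k*a) = k^3*b*(1-b^2) + 3*g^2/(k*b)) \<longleftrightarrow> g^2 = k^4*a*b*(1-a^2-a*b-b^2)/3"
proof -
  have "(k^3*a*(1-a^2) + 3*g^2/(k*a) = k^3*b*(1-b^2) + 3*g^2/(k*b)) \<longleftrightarrow>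
        k^4*a*b*(a*(1-a^2) - b*(1-b^2)) + 3*g^2*(b-a) = 0"
  proof -
    have kab: "k*a*b \<noteq> 0" using assms by simp
    have "(k^3*a*(1-a^2) + 3*g^2/(k*a) - (k^3*b*(1-b^2) + 3*g^2/(k*b)))*(k*a*b)
       = k^4*a*b*(a*(1-a^2) - b*(1-b^2)) + 3*g^2*(b-a)"
      using assms by (simp add: field_simps power2_eq_square power3_eq_cube power4_eq_xxxx)
    moreover have "(x::real) = y \<longleftrightarrow> (x - y)*(k*a*b) = 0" for x y using kab by (simp only: mult_eq_0_iff) simp
    ultimately show ?thesis by metis
  qed
  also have "k^4*a*b*(a*(1-a^2) - b*(1-b^2)) + 3*g^2*(b-a) = (a-b)*(k^4*a*b*(1-a^2-a*b-b^2) - 3*g^2)"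
    by (simp add: algebra_simps power2_eq_square power3_eq_cube)
  finally show ?thesis using assms by auto
qed

lemma val:
  fixes a b k g :: real
  assumes "a \<noteq> 0" "k > 0" "g^2 = k^4*a*b*(1-a^2-a*b-b^2)/3"
  shows "k^3*a*(1-a^2) + 3*g^2/(k*a) = k^3*(a+b)*(1-a^2-b^2)"
proof -
  have "3*g^2/(k*a) = k^3*b*(1-a^2-a*b-b^2)" using assms
    by (simp add: field_simps power2_eq_square power3_eq_cube  power4_eq_xxxx)
  then show ?thesis by (simp add: algebra_simps power2_eq_square power3_eq_cube)
qed

theorem lemma3p2:
  fixes k :: real and \<Delta> :: nat and n :: int
  assumes "k > 0"
    and "- int \<Delta> \<le> n" and "n \<le> -1"
    and "\<not> (n = -1 \<and> n + int \<Delta> = 0)"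
  shows "(\<exists>\<gamma>c :: real \<Rightarrow> real.
            continuous_on {0<..1/2} \<gamma>c \<and>
            (\<forall>\<tau>\<in>{0<..1/2}. Omega k n (\<gamma>c \<tau>) \<tau> = Omega k (n + int \<Delta>) (\<gamma>c \<tau>) \<tau>) \<and>
            (odd \<Delta> \<and> 2 * n = - (int \<Delta> + 1) \<longrightarrow>
               n + int \<Delta> = - n - 1 \<and>
               Omega k n (\<gamma>c (1/2)) (1/2) = 0 \<and>
               Omega k (n + int \<Delta>) (\<gamma>c (1/2)) (1/2) = 0))
       \<and> (\<forall>\<gamma> :: real. \<forall>\<tau>\<in>{0<..1/2}.
            Omega k n \<gamma> \<tau> = Omega k (n + int \<Delta>) \<gamma> \<tau> \<and>
            \<not> (odd \<Delta> \<and> 2 * n = - (int \<Delta> + 1) \<and> \<tau> = 1/2)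
            \<longrightarrow> Omega k n \<gamma> \<tau> \<noteq> 0)"
proof -
  define A where "A = (\<lambda>\<tau>::real. real_of_int n + \<tau>)"
  define B where "B = (\<lambda>\<tau>::real. real_of_int n + real \<Delta> + \<tau>)"
  have D2: "\<Delta> \<ge> 2 \<or> (n = -1 \<and> \<Delta> = 1) \<or> False" using assms by auto
  hence D2: "\<Delta> \<ge> 2" using assms by auto
  have Om: "Omega k m g t = k^3*(real_of_int m + t)*(1-(real_of_int m + t)^2) + 3*g^2/(k*(real_of_int m + t))" for m g t
    by (simp add: Omega_def)
  have nD: "real_of_int (n + int \<Delta>) = real_of_int n + real \<Delta>" by simp
  have props: "A t < 0 \<and> B t > 0 \<and> A t \<noteq> B t \<and> A t ^2 + A t * B t + B t ^2 \<ge> 1 \<and> A t ^2 + B t ^2 > 1" if t: "t \<in> {0<..1/2}" for t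
  proof -
    have a: "A t \<le> -1/2" using t assms unfolding A_def by auto
    have b: "B t > 0" using t assms unfolding B_def by auto
    have d: "B t - A t = real \<Delta>" unfolding A_def B_def by simp
    have d2: "real \<Delta> \<ge> 2" using D2 by simp
    have "A t ^2 + A t * B t + B t ^2 = (3*(A t + B t)^2 + (B t - A t)^2)/4"
      by (simp add: power2_eq_square algebra_simps)
    also have "\<dots> \<ge> (B t - A t)^2/4" by simp
    finally have s1: "A t ^2 + A t * B t + B t ^2 \<ge> (B t - A t)^2/4" .
    have "(B t - A t)^2 \<ge> 2*2" unfolding d power2_eq_square using d2
      by (intro mult_mono) auto
    with s1 have s: "A t ^2 + A t * B t + B t ^2 \<ge> 1" by simp
    have "A t * B t < 0" using a b by (simp add: mult_neg_pos)
    hence "A t ^2 + B t ^2 > A t ^2 + A t * B t + B t ^2" by linarith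
    thus ?thesis using a b s d d2 by auto
  qed
  define G where "G = (\<lambda>t. sqrt (k^4*A t*B t*(1-A t^2-A t*B t-B t^2)/3))"
  have Gsq: "G t ^2 = k^4*A t*B t*(1-A t^2-A t*B t-B t^2)/3" if t: "t \<in> {0<..1/2}" for t
  proof -
    from props[OF t] have "A t * B t \<le> 0" "1-A t^2-A t*B t-B t^2 \<le> 0"
      by (auto intro: mult_nonpos_nonneg)
    hence "(A t*B t)*(1-A t^2-A t*B t-B t^2) \<ge> 0"
      by (rule mult_nonpos_nonpos)
    hence "k^4*((A t*B t)*(1-A t^2-A t*B t-B t^2))/3 \<ge> 0" by simp
    hence "k^4*A t*B t*(1-A t^2-A t*B t-B t^2)/3 \<ge> 0" by (simp add: mult.assoc)
    thus ?thesis unfolding G_def by simp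
  qed
  have eqv: "Omega k n g t = Omega k (n + int \<Delta>) g t \<longleftrightarrow> g^2 = k^4*A t*B t*(1-A t^2-A t*B t-B t^2)/3"
    if t: "t \<in> {0<..1/2}" for g t
    unfolding Om nD using key[of "A t" "B t" k g] props[OF t] assms(1) unfolding A_def B_def
    by (auto simp: add_ac)
  have omv: "Omega k n g t = k^3*(A t + B t)*(1-A t^2-B t^2)"
    if t: "t \<in> {0<..1/2}" and "g^2 = k^4*A t*B t*(1-A t^2-A t*B t-B t^2)/3" for g t
  proof -
    have "Omega k n g t = k^3*A t*(1-A t^2) + 3*g^2/(k*A t)" by (simp add: Omega_def A_def)
    thus ?thesis using val[of "A t" k g "B t"] props[OF t] assms(1) that by auto
  qed
  show ?thesis
  proof (intro conjI exI[of _ G] ballI allI impI)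
    show "continuous_on {0<..1/2} G" unfolding G_def A_def B_def by (intro continuous_intros) auto
  next
    fix t :: real assume t: "t \<in> {0<..1/2}"
    show "Omega k n (G t) t = Omega k (n + int \<Delta>) (G t) t" using eqv[OF t] Gsq[OF t] by simp
  next
    assume "odd \<Delta> \<and> 2 * n = - (int \<Delta> + 1)"
    thus "n + int \<Delta> = - n - 1" by simp
  next
    assume h: "odd \<Delta> \<and> 2 * n = - (int \<Delta> + 1)"
    have t: "(1/2::real) \<in> {0<..1/2}" by simp
    have ab: "A (1/2) + B (1/2) = 0" using h unfolding A_def B_def
    proof -
      have "real_of_int (2*n) = real_of_int (- (int \<Delta> + 1))" using h by simp
      thus "real_of_int n + 1/2 + (real_of_int n + real \<Delta> + 1/2) = 0" by simp
    qed
    show "Omega k n (G (1/2)) (1/2) = 0" using omv[OF t Gsq[OF t]] ab by simp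
    show "Omega k (n + int \<Delta>) (G (1/2)) (1/2) = 0"
      using omv[OF t Gsq[OF t]] ab eqv[OF t, of "G (1/2)"] Gsq[OF t] by simp
  next
    fix g t assume t: "t \<in> {0<..1/2}" and h: "Omega k n g t = Omega k (n + int \<Delta>) g t \<and>
            \<not> (odd \<Delta> \<and> 2 * n = - (int \<Delta> + 1) \<and> t = 1/2)"
    have v: "Omega k n g t = k^3*(A t + B t)*(1-A t^2-B t^2)" using h eqv[OF t] omv[OF t] by auto
    have "A t + B t \<noteq> 0"
    proof
      assume "A t + B t = 0"
      hence e: "2*real_of_int n + real \<Delta> + 2*t = 0" unfolding A_def B_def by simp
      have e2: "2*t = real_of_int (-(2*n + int \<Delta>))" using e by simp
      have "0 < 2*t" "2*t \<le> 1" using t by auto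
      have "-(2*n + int \<Delta>) = 1"
      proof -
        have "(0::real) < real_of_int (-(2*n + int \<Delta>))" "real_of_int (-(2*n + int \<Delta>)) \<le> (1::real)"
          using e2 \<open>0 < 2*t\<close> \<open>2*t \<le> 1\<close> by linarith+
        hence "0 < -(2*n + int \<Delta>)" "-(2*n + int \<Delta>) \<le> 1" by linarith+
        thus ?thesis by linarith
      qed
      hence "2*t = 1" "2*n = -(int \<Delta> + 1)" using e2 by auto
      moreover have "odd \<Delta>" using \<open>2*n = -(int \<Delta> + 1)\<close>
        by presburger
      ultimately show False using h by auto
    qed
    moreover have "1-A t^2-B t^2 \<noteq> 0" using props[OF t] by auto
    ultimately show "Omega k n g t \<noteq> 0" using v assms(1) by simp
  qed
qed

end
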